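(* Let $d\in\mathbb{N}$, let $\rho$ be a norm on $\mathbb{R}^d$, and let $f:(0,\infty)\to[0,1]$ be a function with $f(R)\to 0$ as $R\to\infty$. Then there exist a Lebesgue measurable set $A\subseteq\mathbb{R}^d$ and a sequence of positive real numbers $(R_n)_{n\in\mathbb{N}}$ with $R_n\to\infty$ such that: (i) $\rho(x-y)\neq R_n$ for all $x,y\in A$ and all $n\in\mathbb{N}$; (ii) $\mu\big(A\cap B^{\rho}_{R_n}\big)\geq f(R_n)\,\mu\big(B^{\rho}_{R_n}\big)$ for all $n\in\mathbb{N}$.
   Context: A norm on $\mathbb{R}^d$ is a function $\rho:\mathbb{R}^d\to[0,\infty)$ with $\rho(x)>0$ for $x\neq 0$, $\rho(\lambda x)=|\lambda|\rho(x)$ for all $\lambda\in\mathbb{R}$, $x\in\mathbb{R}^d$, and $\rho(x+y)\le\rho(x)+\rho(y)$. For $R>0$, $B^{\rho}_R=\{x\in\mathbb{R}^d:\rho(x)<R\}$. $\mu$ denotes Lebesgue measure on $\mathbb{R}^d$. (In particular, taking $\rho$ to be the Euclidean norm gives a set $A$ avoiding the Euclidean distances $R_n$ with $\mu(A\cap B_{R_n})\ge f(R_n)\mu(B_{R_n})$.) *)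

theory Defs
  imports "HOL-Analysis.Analysis"
begin

definition is_norm :: "('a::euclidean_space \<Rightarrow> real) \<Rightarrow> bool" where
  "is_norm \<rho> \<longleftrightarrow>
     (\<forall>x. 0 \<le> \<rho> x) \<and>
     (\<forall>x. x \<noteq> 0 \<longrightarrow> \<rho> x > 0) \<and>
     (\<forall>(c::real) x. \<rho> (c *\<^sub>R x) = \<bar>c\<bar> * \<rho> x) \<and>
     (\<forall>x y. \<rho> (x + y) \<le> \<rho> x + \<rho> y)"

definition rho_ball :: "('a \<Rightarrow> real) \<Rightarrow> real \<Rightarrow> 'a set" where
  "rho_ball \<rho> R = {x. \<rho> x < R}"

end

theory Submission
  imports Defs
begin


lemma isn_zero: assumes "is_norm \<rho>" shows "\<rho> 0 = 0"
  using assms unfolding is_norm_def by (metis abs_zero mult_zero_left scaleR_zero_left)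

lemma isn_sum: assumes "is_norm \<rho>" "finite I"
  shows "\<rho> (\<Sum>i\<in>I. v i) \<le> (\<Sum>i\<in>I. \<rho> (v i))"
  using assms(2)
proof induction
  case empty then show ?case using isn_zero[OF assms(1)] by simp
next
  case (insert x F)
  have "\<rho> (\<Sum>i\<in>insert x F. v i) = \<rho> (v x + (\<Sum>i\<in>F. v i))" using insert by simp
  also have "\<dots> \<le> \<rho> (v x) + \<rho> (\<Sum>i\<in>F. v i)" using assms(1) unfolding is_norm_def by blast
  also have "\<dots> \<le> \<rho> (v x) + (\<Sum>i\<in>F. \<rho> (v i))" using insert by simp
  finally show ?case using insert by simp
qed

lemma isn_upper: assumes "is_norm \<rho>"
  shows "\<rho> x \<le> (\<Sum>b\<in>Basis. \<bar>x \<bullet> b\<bar> * \<rho> b)"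
proof -
  have "\<rho> x = \<rho> (\<Sum>b\<in>Basis. (x \<bullet> b) *\<^sub>R b)" by (simp add: euclidean_representation)
  also have "\<dots> \<le> (\<Sum>b\<in>Basis. \<rho> ((x \<bullet> b) *\<^sub>R b))" by (rule isn_sum[OF assms]) simp
  also have "\<dots> = (\<Sum>b\<in>Basis. \<bar>x \<bullet> b\<bar> * \<rho> b)" using assms unfolding is_norm_def by simp
  finally show ?thesis .
qed

lemma isn_upper2: assumes "is_norm \<rho>"
  shows "\<rho> x \<le> norm x * (\<Sum>b\<in>Basis. \<rho> b)"
proof -
  have "\<rho> x \<le> (\<Sum>b\<in>Basis. \<bar>x \<bullet> b\<bar> * \<rho> b)" by (rule isn_upper[OF assms])
  also have "\<dots> \<le> (\<Sum>b\<in>Basis. norm x * \<rho> b)"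
    apply (rule sum_mono) apply (rule mult_right_mono)
    using Basis_le_norm assms unfolding is_norm_def by auto
  finally show ?thesis by (simp add: sum_distrib_left)
qed

lemma isn_minus: assumes "is_norm \<rho>" shows "\<rho> (- x) = \<rho> x"
  using assms unfolding is_norm_def by (metis abs_minus_cancel abs_one mult_1 scaleR_minus1_left)

lemma isn_cont: assumes "is_norm \<rho>" shows "continuous_on S \<rho>"
proof -
  define a where "a = (\<Sum>b\<in>(Basis::'a set). \<rho> b)"
  have "\<bar>\<rho> x - \<rho> y\<bar> \<le> a * dist x y" for x y :: 'a
  proof -
    have "\<rho> x \<le> \<rho> y + \<rho> (x - y)" using assms unfolding is_norm_def by (metis add.commute diff_add_cancel)
    moreover have "\<rho> y \<le> \<rho> x + \<rho> (y - x)" using assms unfolding is_norm_def by (metis add.commute diff_add_cancel)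
    moreover have "\<rho> (y - x) = \<rho> (x - y)" using isn_minus[OF assms, of "x - y"] by simp
    moreover have "\<rho> (x - y) \<le> a * dist x y" using isn_upper2[OF assms, of "x-y"] by (simp add: a_def dist_norm mult.commute)
    ultimately show ?thesis by linarith
  qed
  moreover have "a \<ge> 0" unfolding a_def using assms unfolding is_norm_def by (simp add: sum_nonneg)
  ultimately show ?thesis
    unfolding continuous_on_iff
  proof (intro ballI allI impI)
    fix x e assume lip: "\<And>x y. \<bar>\<rho> x - \<rho> y\<bar> \<le> a * dist x y" and a0: "0 \<le> a" and e: "(0::real) < e"
    show "\<exists>d>0. \<forall>x'\<in>S. dist x' x < d \<longrightarrow> dist (\<rho> x') (\<rho> x) < e"
    proof (intro exI[of _ "e / (a + 1)"] conjI ballI impI)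
      show "0 < e / (a + 1)" using a0 e by simp
      fix y assume "dist y x < e / (a + 1)"
      then have "(a+1) * dist y x < e" using a0 by (simp add: field_simps)
      moreover have "a * dist y x \<le> (a+1) * dist y x" by (simp add: distrib_right)
      ultimately show "dist (\<rho> y) (\<rho> x) < e" using lip[of y x] by (simp add: dist_real_def)
    qed
  qed
qed

lemma isn_lower: assumes "is_norm \<rho>"
  shows "\<exists>c>0. \<forall>x::'a::euclidean_space. c * norm x \<le> \<rho> x"
proof -
  have ne: "sphere (0::'a) 1 \<noteq> {}"
  proof -
    have "(SOME b. b \<in> (Basis::'a set)) \<in> sphere 0 1" using SOME_Basis by (simp add: norm_Basis)
    then show ?thesis by blast
  qed
  obtain x0 where x0: "x0 \<in> sphere (0::'a) 1" "\<forall>y\<in>sphere 0 1. \<rho> x0 \<le> \<rho> y"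
    using continuous_attains_inf[OF compact_sphere ne isn_cont[OF assms]] by blast
  have "x0 \<noteq> 0" using x0(1) by auto
  then have c0: "\<rho> x0 > 0" using assms unfolding is_norm_def by auto
  have "\<rho> x0 * norm x \<le> \<rho> x" for x :: 'a
  proof (cases "x = 0")
    case True then show ?thesis using isn_zero[OF assms] by simp
  next
    case False
    have "\<rho> x0 \<le> \<rho> ((1 / norm x) *\<^sub>R x)" using x0(2) False by simp
    also have "\<dots> = \<rho> x / norm x" using assms unfolding is_norm_def by simp
    finally show ?thesis using False by (simp add: field_simps)
  qed
  then show ?thesis using c0 by blast
qed

lemma period_card:
  fixes Q :: "nat \<Rightarrow> bool"
  shows "card {j. j < q * t \<and> Q (j mod t)} = q * card {i. i < t \<and> Q i}"
proof (induction q)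
  case 0 then show ?case by simp
next
  case (Suc q)
  have eq: "{j. j < Suc q * t \<and> Q (j mod t)} = {j. j < q * t \<and> Q (j mod t)} \<union> (\<lambda>i. q*t + i) ` {i. i < t \<and> Q i}"
  proof (intro set_eqI iffI)
    fix j assume j: "j \<in> {j. j < Suc q * t \<and> Q (j mod t)}"
    show "j \<in> {j. j < q * t \<and> Q (j mod t)} \<union> (\<lambda>i. q*t + i) ` {i. i < t \<and> Q i}"
    proof (cases "j < q * t")
      case True then show ?thesis using j by auto
    next
      case False
      then have "j = q * t + (j - q*t)" "j - q*t < t" using j by auto
      moreover have "(q * t + (j - q*t)) mod t = j - q * t" using \<open>j - q*t < t\<close> by simp
      ultimately have "j - q*t \<in> {i. i < t \<and> Q i}" using j by (metis (mono_tags, lifting) mem_Collect_eq)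
      then show ?thesis using \<open>j = q * t + (j - q*t)\<close> by blast
    qed
  next
    fix j assume "j \<in> {j. j < q * t \<and> Q (j mod t)} \<union> (\<lambda>i. q*t + i) ` {i. i < t \<and> Q i}"
    then show "j \<in> {j. j < Suc q * t \<and> Q (j mod t)}" by auto
  qed
  have "card ({j. j < q * t \<and> Q (j mod t)} \<union> (\<lambda>i. q*t + i) ` {i. i < t \<and> Q i})
     = card {j. j < q * t \<and> Q (j mod t)} + card ((\<lambda>i. q*t + i) ` {i. i < t \<and> Q i})"
    by (rule card_Un_disjoint) auto
  also have "card ((\<lambda>i. q*t + i) ` {i. i < t \<and> Q i}) = card {i. i < t \<and> Q i}"
    by (rule card_image) (simp add: inj_on_def)
  finally show ?case using eq Suc by simp
qed

lemma lebesgue_borel_eq: "S \<in> sets borel \<Longrightarrow> emeasure lebesgue S = emeasure lborel (S::'a::euclidean_space set)"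
  by simp

lemma ball_bound:
  assumes "is_norm \<rho>" "c > 0" "\<forall>x::'a::euclidean_space. c * norm x \<le> \<rho> x" "R \<ge> 0"
  shows "emeasure lebesgue (rho_ball \<rho> R) \<le> ennreal ((2 * R / c) ^ DIM('a))"
proof -
  define r where "r = R / c"
  have r0: "r \<ge> 0" using assms unfolding r_def by simp
  have sub: "rho_ball \<rho> R \<subseteq> cbox (- (r *\<^sub>R One)) (r *\<^sub>R One)"
  proof
    fix x assume "x \<in> rho_ball \<rho> R"
    then have "c * norm x < R" using assms(3) unfolding rho_ball_def by (smt (verit) mem_Collect_eq)
    then have nx: "norm x \<le> r" using assms(2) unfolding r_def by (simp add: field_simps)
    show "x \<in> cbox (- (r *\<^sub>R One)) (r *\<^sub>R One)"
      unfolding mem_box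
    proof (intro ballI conjI)
      fix b :: 'a assume b: "b \<in> Basis"
      have "\<bar>x \<bullet> b\<bar> \<le> r" using Basis_le_norm[OF b, of x] nx by simp
      then show "(- (r *\<^sub>R One)) \<bullet> b \<le> x \<bullet> b" "x \<bullet> b \<le> (r *\<^sub>R One) \<bullet> b" using b by auto
    qed
  qed
  have op: "rho_ball \<rho> R \<in> sets lebesgue"
  proof -
    have "open (rho_ball \<rho> R)" unfolding rho_ball_def
      by (rule open_Collect_less[OF isn_cont[OF assms(1)] continuous_on_const])
    then show ?thesis by (simp add: borel_open)
  qed
  have "emeasure lebesgue (rho_ball \<rho> R) \<le> emeasure lebesgue (cbox (- (r *\<^sub>R One)) (r *\<^sub>R One) :: 'a set)"
    apply (rule emeasure_mono[OF sub])
    apply (rule sets_completionI_sets)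
    apply (simp add: borel_closed)
    done
  also have "\<dots> = emeasure lborel (cbox (- (r *\<^sub>R One)) (r *\<^sub>R One) :: 'a set)" by simp
  also have "\<dots> = ennreal (\<Prod>b\<in>(Basis::'a set). 2 * r)"
  proof -
    have "\<forall>b\<in>(Basis::'a set). (- (r *\<^sub>R One)) \<bullet> b \<le> (r *\<^sub>R One) \<bullet> b" using r0 by simp
    moreover have "(\<Prod>b\<in>(Basis::'a set). (r *\<^sub>R One - (- (r *\<^sub>R One))) \<bullet> b) = (\<Prod>b\<in>(Basis::'a set). 2 * r)"
      by (rule prod.cong) (auto simp: inner_add_left)
    ultimately show ?thesis by (simp only: emeasure_lborel_cbox_eq if_P)
  qed
  also have "\<dots> = ennreal ((2 * R / c) ^ DIM('a))" by (simp add: r_def)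
  finally show ?thesis .
qed

lemma coord:
  fixes t :: real and \<tau> \<sigma> :: nat
  assumes "0 \<le> t" "nat \<lfloor>t\<rfloor> mod \<tau> < \<sigma>"
  shows "real (nat \<lfloor>t\<rfloor> div \<tau> * \<tau>) \<le> t \<and> t < real (nat \<lfloor>t\<rfloor> div \<tau> * \<tau>) + real \<sigma>"
proof -
  define X where "X = nat \<lfloor>t\<rfloor>"
  have X1: "real X \<le> t" "t < real X + 1" using assms(1) unfolding X_def by linarith+
  have X2: "X = X div \<tau> * \<tau> + X mod \<tau>" by simp
  have "X mod \<tau> + 1 \<le> \<sigma>" using assms(2) unfolding X_def by simp
  then have "real (X mod \<tau>) + 1 \<le> real \<sigma>" by linarith
  moreover have "real X = real (X div \<tau> * \<tau>) + real (X mod \<tau>)" using X2 by (metis of_nat_add)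
  ultimately show ?thesis using X1 unfolding X_def[symmetric] by linarith
qed

lemma avoid:
  fixes \<rho> :: "'a::euclidean_space \<Rightarrow> real" and \<tau> \<sigma> :: nat
  assumes rn: "is_norm \<rho>" and c: "c > 0" "\<forall>x::'a. c * norm x \<le> \<rho> x"
    and a: "a = (\<Sum>b\<in>Basis. \<rho> b)"
    and ts: "a * \<sigma> \<le> c * (real \<tau> - real \<sigma>)"
    and hx: "\<forall>b\<in>Basis. 0 \<le> x \<bullet> b \<and> nat \<lfloor>x \<bullet> b\<rfloor> mod \<tau> < \<sigma>"
    and hy: "\<forall>b\<in>Basis. 0 \<le> y \<bullet> b \<and> nat \<lfloor>y \<bullet> b\<rfloor> mod \<tau> < \<sigma>"
  shows "\<rho> (x - y) \<noteq> a * \<sigma>"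
proof (cases "\<forall>b\<in>Basis. nat \<lfloor>x \<bullet> b\<rfloor> div \<tau> = nat \<lfloor>y \<bullet> b\<rfloor> div \<tau>")
  case True
  have lt: "\<bar>(x - y) \<bullet> b\<bar> < \<sigma>" if b: "b \<in> Basis" for b
    using coord[of "x \<bullet> b" \<tau> \<sigma>] coord[of "y \<bullet> b" \<tau> \<sigma>] hx hy b True
    by (auto simp: inner_diff_left)
  have "\<rho> (x - y) \<le> (\<Sum>b\<in>Basis. \<bar>(x - y) \<bullet> b\<bar> * \<rho> b)" by (rule isn_upper[OF rn])
  also have "\<dots> < (\<Sum>b\<in>Basis. real \<sigma> * \<rho> b)"
  proof (rule sum_strict_mono)
    fix b :: 'a assume b: "b \<in> Basis"
    then have "b \<noteq> 0" by auto
    then have "\<rho> b > 0" using rn unfolding is_norm_def by auto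
    then show "\<bar>(x - y) \<bullet> b\<bar> * \<rho> b < real \<sigma> * \<rho> b" using lt[OF b] by simp
  qed auto
  also have "\<dots> = a * \<sigma>" unfolding a by (simp add: sum_distrib_left mult.commute)
  finally show ?thesis by simp
next
  case False
  then obtain b where b: "b \<in> Basis" and ne: "nat \<lfloor>x \<bullet> b\<rfloor> div \<tau> \<noteq> nat \<lfloor>y \<bullet> b\<rfloor> div \<tau>" by blast
  define qx where "qx = nat \<lfloor>x \<bullet> b\<rfloor> div \<tau>"
  define qy where "qy = nat \<lfloor>y \<bullet> b\<rfloor> div \<tau>"
  have cx: "real (qx * \<tau>) \<le> x \<bullet> b" "x \<bullet> b < real (qx * \<tau>) + \<sigma>"
    using coord[of "x \<bullet> b" \<tau> \<sigma>] hx b unfolding qx_def by auto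
  have cy: "real (qy * \<tau>) \<le> y \<bullet> b" "y \<bullet> b < real (qy * \<tau>) + \<sigma>"
    using coord[of "y \<bullet> b" \<tau> \<sigma>] hy b unfolding qy_def by auto
  have big: "\<bar>(x - y) \<bullet> b\<bar> > real \<tau> - real \<sigma>"
  proof (cases "qx < qy")
    case True
    then have "qx * \<tau> + \<tau> \<le> qy * \<tau>" by (metis add.commute mult_Suc Suc_leI mult_le_mono1)
    then have "real (qx * \<tau>) + real \<tau> \<le> real (qy * \<tau>)" by (metis of_nat_add of_nat_le_iff)
    then show ?thesis using cx cy by (auto simp: inner_diff_left)
  next
    case False
    then have "qy < qx" using ne unfolding qx_def qy_def by auto
    then have "qy * \<tau> + \<tau> \<le> qx * \<tau>" by (metis add.commute mult_Suc Suc_leI mult_le_mono1)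
    then have "real (qy * \<tau>) + real \<tau> \<le> real (qx * \<tau>)" by (metis of_nat_add of_nat_le_iff)
    then show ?thesis using cx cy by (auto simp: inner_diff_left)
  qed
  have "c * (real \<tau> - real \<sigma>) < c * \<bar>(x - y) \<bullet> b\<bar>" using big c by simp
  also have "\<dots> \<le> c * norm (x - y)" using Basis_le_norm[OF b, of "x - y"] c by simp
  also have "\<dots> \<le> \<rho> (x - y)" using c by blast
  finally show ?thesis using ts by simp
qed

lemma boxes:
  fixes \<rho> :: "'a::euclidean_space \<Rightarrow> real" and J :: "nat set"
  assumes rn: "is_norm \<rho>" and a: "a = (\<Sum>b\<in>Basis. \<rho> b)"
    and J: "finite J" "\<forall>j\<in>J. j < L"
    and S: "\<And>t. 0 \<le> t \<Longrightarrow> nat \<lfloor>t\<rfloor> \<in> J \<Longrightarrow> t \<in> S"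
    and A: "A = {x::'a. \<forall>b\<in>Basis. x \<bullet> b \<in> S}" "A \<in> sets lebesgue"
  shows "emeasure lebesgue (A \<inter> rho_ball \<rho> (a * L)) \<ge> ennreal (real (card J) ^ DIM('a))"
proof -
  define lo :: "(('a \<Rightarrow> nat) \<Rightarrow> 'a)" where "lo g = (\<Sum>b\<in>Basis. real (g b) *\<^sub>R b)" for g
  define hi :: "(('a \<Rightarrow> nat) \<Rightarrow> 'a)" where "hi g = (\<Sum>b\<in>Basis. (real (g b) + 1) *\<^sub>R b)" for g
  define F where "F g = box (lo g) (hi g)" for g
  define I where "I = PiE (Basis::'a set) (\<lambda>_. J)"
  have loi: "lo g \<bullet> b = real (g b)" if "b \<in> Basis" for g b using that unfolding lo_def by simp
  have hii: "hi g \<bullet> b = real (g b) + 1" if "b \<in> Basis" for g b using that unfolding hi_def by simp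
  have memF: "x \<in> F g \<longleftrightarrow> (\<forall>b\<in>Basis. real (g b) < x \<bullet> b \<and> x \<bullet> b < real (g b) + 1)" for x g
    unfolding F_def mem_box using loi hii by auto
  have finI: "finite I" unfolding I_def using J(1) by (simp add: finite_PiE)
  have cardI: "card I = card J ^ DIM('a)" unfolding I_def by (simp add: card_PiE)
  have disj: "disjoint_family_on F I"
    unfolding disjoint_family_on_def
  proof (intro ballI impI)
    fix g g' assume g: "g \<in> I" "g' \<in> I" "g \<noteq> g'"
    then obtain b where b: "b \<in> Basis" "g b \<noteq> g' b" unfolding I_def
      by (metis PiE_ext)
    show "F g \<inter> F g' = {}"
    proof (rule ccontr)
      assume "F g \<inter> F g' \<noteq> {}"
      then obtain x where "x \<in> F g" "x \<in> F g'" by blast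
      then have "real (g b) < x \<bullet> b" "x \<bullet> b < real (g b) + 1" "real (g' b) < x \<bullet> b" "x \<bullet> b < real (g' b) + 1"
        using memF b(1) by auto
      then have "g b < g' b + 1" "g' b < g b + 1" by linarith+
      then show False using b(2) by simp
    qed
  qed
  have meas1: "emeasure lborel (F g) = 1" for g
  proof -
    have "\<forall>b\<in>(Basis::'a set). lo g \<bullet> b \<le> hi g \<bullet> b" using loi hii by simp
    moreover have "(\<Prod>b\<in>(Basis::'a set). (hi g - lo g) \<bullet> b) = (\<Prod>b\<in>(Basis::'a set). 1)"
      by (rule prod.cong) (auto simp: inner_diff_left loi hii)
    ultimately show ?thesis unfolding F_def by (simp only: emeasure_lborel_box_eq if_P) simp
  qed
  define E where "E = (\<Union>(F ` I))"
  have "emeasure lborel E = (\<Sum>g\<in>I. emeasure lborel (F g))"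
  proof -
    have "F ` I \<subseteq> sets lborel" by (auto simp: F_def)
    then show ?thesis unfolding E_def using sum_emeasure[OF _ disj finI] by simp
  qed
  also have "\<dots> = of_nat (card I)" using meas1 by simp
  finally have mE: "emeasure lborel E = ennreal (real (card J) ^ DIM('a))"
    using cardI by (simp add: ennreal_of_nat_eq_real_of_nat)
  have Eb: "E \<in> sets borel" unfolding E_def F_def by (auto simp: finI)
  have sub: "E \<subseteq> A \<inter> rho_ball \<rho> (a * L)"
  proof
    fix x assume "x \<in> E"
    then obtain g where g: "g \<in> I" "x \<in> F g" unfolding E_def by blast
    have co: "real (g b) < x \<bullet> b \<and> x \<bullet> b < real (g b) + 1" if "b \<in> Basis" for b
      using g(2) memF that by blast
    have gJ: "g b \<in> J" if "b \<in> Basis" for b using g(1) that unfolding I_def by auto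
    have fl: "nat \<lfloor>x \<bullet> b\<rfloor> = g b" if "b \<in> Basis" for b
    proof -
      have "\<lfloor>x \<bullet> b\<rfloor> = int (g b)" using co[OF that] by (simp add: floor_eq_iff)
      then show ?thesis by simp
    qed
    have "x \<in> A" unfolding A(1)
    proof (intro CollectI ballI)
      fix b :: 'a assume b: "b \<in> Basis"
      show "x \<bullet> b \<in> S" using S[of "x \<bullet> b"] co[OF b] fl[OF b] gJ[OF b] by simp
    qed
    moreover have "\<rho> x < a * L"
    proof -
      have "\<rho> x \<le> (\<Sum>b\<in>Basis. \<bar>x \<bullet> b\<bar> * \<rho> b)" by (rule isn_upper[OF rn])
      also have "\<dots> < (\<Sum>b\<in>Basis. real L * \<rho> b)"
      proof (rule sum_strict_mono)
        fix b :: 'a assume b: "b \<in> Basis"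
        then have "b \<noteq> 0" by auto
        then have "\<rho> b > 0" using rn unfolding is_norm_def by auto
        moreover have "g b + 1 \<le> L" using J(2) gJ[OF b] by auto
        then have "\<bar>x \<bullet> b\<bar> < real L" using co[OF b] by linarith
        ultimately show "\<bar>x \<bullet> b\<bar> * \<rho> b < real L * \<rho> b" by simp
      qed auto
      also have "\<dots> = a * L" unfolding a by (simp add: sum_distrib_left mult.commute)
      finally show ?thesis .
    qed
    ultimately show "x \<in> A \<inter> rho_ball \<rho> (a * L)" unfolding rho_ball_def by simp
  qed
  have Bl: "rho_ball \<rho> (a * L) \<in> sets lebesgue"
  proof -
    have "open (rho_ball \<rho> (a * L))" unfolding rho_ball_def
      by (rule open_Collect_less[OF isn_cont[OF rn] continuous_on_const])
    then show ?thesis by (simp add: borel_open)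
  qed
  have "ennreal (real (card J) ^ DIM('a)) = emeasure lebesgue E" using mE Eb by simp
  also have "\<dots> \<le> emeasure lebesgue (A \<inter> rho_ball \<rho> (a * L))"
    by (rule emeasure_mono[OF sub]) (use A(2) Bl in auto)
  finally show ?thesis .
qed


definition sg :: "(nat \<Rightarrow> nat) \<Rightarrow> nat \<Rightarrow> nat \<Rightarrow> nat" where
  "sg k p n = p ^ n * (\<Prod>i\<le>n. k i)"

lemma sg_0: "sg k p 0 = k 0" by (simp add: sg_def)
lemma sg_Suc: "sg k p (Suc n) = k (Suc n) * (p * sg k p n)"
  by (simp add: sg_def prod.atMost_Suc algebra_simps)

lemma sg_dvd: "m \<le> n \<Longrightarrow> p * sg k p m dvd p * sg k p n"
proof (induction n rule: dec_induct)
  case base then show ?case by simp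
next
  case (step n)
  have "p * sg k p n dvd p * sg k p (Suc n)" unfolding sg_Suc by simp
  then show ?case using step dvd_trans by blast
qed

lemma sg_pos: assumes "p \<ge> 1" "\<forall>i. k i \<ge> 1" shows "sg k p n \<ge> 1"
proof -
  have "1 \<le> prod k {..n}" by (rule prod_ge_1) (use assms in auto)
  moreover have "1 \<le> p ^ n" using assms(1) by (simp add: one_le_power)
  ultimately have "1 * 1 \<le> p ^ n * prod k {..n}" by (metis mult_le_mono)
  then show ?thesis unfolding sg_def by simp
qed

lemma sg_mono: assumes "p \<ge> 1" "\<forall>i. k i \<ge> 1" shows "m \<le> n \<Longrightarrow> sg k p m \<le> sg k p n"
proof (induction n rule: dec_induct)
  case base then show ?case by simp
next
  case (step n)
  have "1 * sg k p n \<le> (k (Suc n) * p) * sg k p n"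
    by (rule mult_le_mono1) (use assms in \<open>simp add: one_le_mult_iff\<close>)
  then have "sg k p n \<le> k (Suc n) * (p * sg k p n)" by (simp add: mult.assoc)
  then show ?case using step le_trans unfolding sg_Suc by blast
qed

lemma sg_ge: "p \<ge> 1 \<Longrightarrow> \<forall>i. k i \<ge> 1 \<Longrightarrow> k n \<le> sg k p n"
proof (cases n)
  case 0 then show ?thesis by (simp add: sg_0)
next
  case (Suc m)
  assume a: "p \<ge> 1" "\<forall>i. k i \<ge> 1"
  have "1 * 1 \<le> p * sg k p m" by (rule mult_le_mono) (use a sg_pos[OF a] in auto)
  then have "p * sg k p m \<ge> 1" by simp
  then show ?thesis unfolding Suc sg_Suc by simp
qed

lemma sg_card:
  assumes "p \<ge> 1"
  shows "card {j. j < sg k p N \<and> (\<forall>m<N. j mod (p * sg k p m) < sg k p m)} = (\<Prod>i\<le>N. k i)"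
proof (induction N)
  case 0 then show ?case by (simp add: sg_0)
next
  case (Suc N)
  define Q where "Q i = (\<forall>m\<le>N. i mod (p * sg k p m) < sg k p m)" for i
  have eq1: "{j. j < sg k p (Suc N) \<and> (\<forall>m<Suc N. j mod (p * sg k p m) < sg k p m)}
      = {j. j < k (Suc N) * (p * sg k p N) \<and> Q (j mod (p * sg k p N))}"
  proof -
    have "j mod (p * sg k p N) mod (p * sg k p m) = j mod (p * sg k p m)" if "m \<le> N" for j m
      using mod_mod_cancel[OF sg_dvd[OF that]] .
    then have "(\<forall>m<Suc N. j mod (p * sg k p m) < sg k p m) \<longleftrightarrow> Q (j mod (p * sg k p N))" for j
      unfolding Q_def less_Suc_eq_le by simp
    then show ?thesis by (simp only: sg_Suc)
  qed
  have eq2: "{i. i < p * sg k p N \<and> Q i} = {j. j < sg k p N \<and> (\<forall>m<N. j mod (p * sg k p m) < sg k p m)}"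
  proof (intro set_eqI iffI)
    fix i assume i: "i \<in> {i. i < p * sg k p N \<and> Q i}"
    then have "i mod (p * sg k p N) < sg k p N" unfolding Q_def by auto
    then have "i < sg k p N" using i by simp
    then show "i \<in> {j. j < sg k p N \<and> (\<forall>m<N. j mod (p * sg k p m) < sg k p m)}" using i unfolding Q_def by auto
  next
    fix i assume i: "i \<in> {j. j < sg k p N \<and> (\<forall>m<N. j mod (p * sg k p m) < sg k p m)}"
    have "sg k p N \<le> p * sg k p N" using assms by simp
    moreover have "i < sg k p N" using i by simp
    ultimately have "i < p * sg k p N" by linarith
    moreover then have "i mod (p * sg k p N) < sg k p N" using i by simp
    ultimately show "i \<in> {i. i < p * sg k p N \<and> Q i}" using i unfolding Q_def
      by (auto simp: le_less)
  qed
  have "card {j. j < sg k p (Suc N) \<and> (\<forall>m<Suc N. j mod (p * sg k p m) < sg k p m)}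
     = k (Suc N) * card {j. j < sg k p N \<and> (\<forall>m<N. j mod (p * sg k p m) < sg k p m)}"
    by (simp only: eq1 period_card eq2)
  then show ?case using Suc.IH by (simp add: prod.atMost_Suc)
qed



theorem theorem1:
  fixes \<rho> :: "'a::euclidean_space \<Rightarrow> real"
    and f :: "real \<Rightarrow> real"
  assumes "is_norm \<rho>"
    and "\<And>R. R > 0 \<Longrightarrow> 0 \<le> f R \<and> f R \<le> 1"
    and "(f \<longlongrightarrow> 0) at_top"
  shows "\<exists>(A::'a set) (R::nat \<Rightarrow> real).
           A \<in> sets lebesgue \<and>
           (\<forall>n. R n > 0) \<and> filterlim R at_top sequentially \<and>
           (\<forall>n. \<forall>x\<in>A. \<forall>y\<in>A. \<rho> (x - y) \<noteq> R n) \<and>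
           (\<forall>n. emeasure lebesgue (A \<inter> rho_ball \<rho> (R n))
                  \<ge> ennreal (f (R n)) * emeasure lebesgue (rho_ball \<rho> (R n)))"
proof -
  note rn = assms(1)
  obtain c where c: "c > 0" "\<forall>x::'a. c * norm x \<le> \<rho> x" using isn_lower[OF rn] by blast
  define a where "a = (\<Sum>b\<in>(Basis::'a set). \<rho> b)"
  have a0: "a > 0" unfolding a_def
  proof (rule sum_pos)
    fix b :: 'a assume "b \<in> Basis" then have "b \<noteq> 0" by auto
    then show "\<rho> b > 0" using rn unfolding is_norm_def by auto
  qed auto
  define p :: nat where "p = nat \<lceil>a / c\<rceil> + 1"
  have p1: "p \<ge> 1" unfolding p_def by simp
  have pac: "real p - 1 \<ge> a / c" unfolding p_def using a0 c(1) by linarith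
  define \<epsilon> where "\<epsilon> N = (c / (2 * a * real p ^ N)) ^ DIM('a)" for N
  have \<epsilon>0: "\<epsilon> N > 0" for N unfolding \<epsilon>_def using c(1) a0 p1 by simp
  have "\<forall>N. \<exists>X. \<forall>R\<ge>X. f R \<le> \<epsilon> N"
  proof
    fix N
    have "eventually (\<lambda>R. f R < \<epsilon> N) at_top" using order_tendstoD(2)[OF assms(3) \<epsilon>0] .
    then show "\<exists>X. \<forall>R\<ge>X. f R \<le> \<epsilon> N" unfolding eventually_at_top_linorder by (meson less_imp_le)
  qed
  then obtain X where X: "\<And>N R. R \<ge> X N \<Longrightarrow> f R \<le> \<epsilon> N" by metis
  define k :: "nat \<Rightarrow> nat" where "k N = nat \<lceil>X N / a\<rceil> + N + 1" for N
  have k1: "\<forall>i. k i \<ge> 1" unfolding k_def by simp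
  define \<sigma> where "\<sigma> = sg k p"
  define \<tau> where "\<tau> n = p * \<sigma> n" for n
  define R where "R n = a * real (\<sigma> n)" for n
  define S where "S = {t::real. 0 \<le> t \<and> (\<forall>n. nat \<lfloor>t\<rfloor> mod \<tau> n < \<sigma> n)}"
  define A where "A = {x::'a. \<forall>b\<in>Basis. x \<bullet> b \<in> S}"
  have kle: "k n \<le> \<sigma> n" for n unfolding \<sigma>_def by (rule sg_ge[OF p1 k1])
  have Aleb: "A \<in> sets lebesgue"
  proof -
    have "A \<in> sets borel" unfolding A_def S_def by measurable
    then show ?thesis by simp
  qed
  have Rpos: "R n > 0" for n
  proof -
    have "\<sigma> n \<ge> 1" using kle[of n] k1 by (metis le_trans)
    then show ?thesis unfolding R_def using a0 by simp
  qed
  have Rlim: "filterlim R at_top sequentially"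
  proof (rule filterlim_at_top_mono[of "\<lambda>n. a * real n"])
    show "filterlim (\<lambda>n. a * real n) at_top sequentially"
      using a0 by (intro filterlim_tendsto_pos_mult_at_top[OF tendsto_const] filterlim_real_sequentially) auto
    show "\<forall>\<^sub>F n in sequentially. a * real n \<le> R n"
    proof (intro always_eventually allI)
      fix n
      have "n \<le> \<sigma> n" using kle[of n] unfolding k_def by linarith
      then show "a * real n \<le> R n" unfolding R_def using a0 by simp
    qed
  qed
  have avoidA: "\<rho> (x - y) \<noteq> R n" if "x \<in> A" "y \<in> A" for x y n
  proof -
    have "a * real (\<sigma> n) \<le> c * (real (\<tau> n) - real (\<sigma> n))"
    proof -
      have "real (\<tau> n) - real (\<sigma> n) = (real p - 1) * real (\<sigma> n)" unfolding \<tau>_def by (simp add: algebra_simps)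
      moreover have "a \<le> c * (real p - 1)" using pac c(1) by (simp add: field_simps)
      then have "a * real (\<sigma> n) \<le> (c * (real p - 1)) * real (\<sigma> n)" by (rule mult_right_mono) simp
      ultimately show ?thesis by (simp add: mult.assoc)
    qed
    then show ?thesis unfolding R_def
      by (rule avoid[OF rn c a_def]) (use that in \<open>auto simp: A_def S_def\<close>)
  qed
  have measA: "emeasure lebesgue (A \<inter> rho_ball \<rho> (R N))
                  \<ge> ennreal (f (R N)) * emeasure lebesgue (rho_ball \<rho> (R N))" for N
  proof -
    define J where "J = {j. j < \<sigma> N \<and> (\<forall>m<N. j mod (p * \<sigma> m) < \<sigma> m)}"
    have cardJ: "card J = (\<Prod>i\<le>N. k i)" unfolding J_def \<sigma>_def by (rule sg_card[OF p1])
    have sigJ: "real (\<sigma> N) = real p ^ N * real (card J)"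
      unfolding cardJ \<sigma>_def sg_def by simp
    have finJ: "finite J" unfolding J_def by simp
    have Jin: "t \<in> S" if "0 \<le> t" "nat \<lfloor>t\<rfloor> \<in> J" for t
      unfolding S_def
    proof (intro CollectI conjI allI)
      show "0 \<le> t" by fact
      fix m
      show "nat \<lfloor>t\<rfloor> mod \<tau> m < \<sigma> m"
      proof (cases "m < N")
        case True then show ?thesis using that(2) unfolding J_def \<tau>_def by auto
      next
        case False
        then have "\<sigma> N \<le> \<sigma> m" unfolding \<sigma>_def by (intro sg_mono[OF p1 k1]) auto
        moreover have "\<sigma> m \<le> \<tau> m" unfolding \<tau>_def using p1 by simp
        moreover have "nat \<lfloor>t\<rfloor> < \<sigma> N" using that(2) unfolding J_def by auto
        ultimately show ?thesis by simp
      qed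
    qed
    have lower: "emeasure lebesgue (A \<inter> rho_ball \<rho> (R N)) \<ge> ennreal (real (card J) ^ DIM('a))"
      unfolding R_def
      by (rule boxes[OF rn a_def finJ _ Jin A_def Aleb]) (auto simp: J_def)
    have fR: "f (R N) \<le> \<epsilon> N"
    proof (rule X)
      have "X N \<le> a * real (k N)"
      proof -
        have "X N / a \<le> real (k N)" unfolding k_def by linarith
        then show ?thesis using a0 by (simp add: field_simps)
      qed
      also have "\<dots> \<le> R N" unfolding R_def using kle[of N] a0 by simp
      finally show "X N \<le> R N" .
    qed
    have "ennreal (f (R N)) * emeasure lebesgue (rho_ball \<rho> (R N))
          \<le> ennreal (\<epsilon> N) * ennreal ((2 * R N / c) ^ DIM('a))"
      by (intro mult_mono ennreal_leI fR ball_bound[OF rn c] less_imp_le[OF Rpos]) auto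
    also have "\<dots> = ennreal (\<epsilon> N * (2 * R N / c) ^ DIM('a))"
      using \<epsilon>0[of N] Rpos[of N] c(1) by (intro ennreal_mult[symmetric]) auto
    also have "\<epsilon> N * (2 * R N / c) ^ DIM('a) = real (card J) ^ DIM('a)"
    proof -
      have "\<epsilon> N * (2 * R N / c) ^ DIM('a) = (c / (2 * a * real p ^ N) * (2 * R N / c)) ^ DIM('a)"
        unfolding \<epsilon>_def by (simp only: power_mult_distrib)
      also have "c / (2 * a * real p ^ N) * (2 * R N / c) = real (card J)"
        unfolding R_def sigJ using c(1) a0 p1 by (simp add: field_simps)
      finally show ?thesis .
    qed
    finally show ?thesis using lower by (rule order_trans)
  qed
  show ?thesis
    by (intro exI[of _ A] exI[of _ R] conjI allI ballI Aleb Rpos Rlim avoidA measA)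
qed

end
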